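(* Let $N\ge1$, $m>1$, $\alpha,\beta\in\mathbb R$ with $N+\alpha-m>0$ and $\beta-\alpha+1>0$; let $s_0\ge0$, $\lambda>0$, $\wp>m-1$, and let $u$ be a positive solution of $$-(r^{N+\alpha-1}|u'(r)|^{m-2}u'(r))'=\lambda r^{N+\beta-1}u^{\wp}(r),\ r\in(s_0,\infty),\qquad u(s_0)=1,\quad u'(s_0)\le0.$$ Let $\varrho=\frac{N+\alpha-m}{m-1}$ and $U_\varrho(r)=ru'(r)+\varrho u(r)$. Then there are positive constants $C_1,C_2$ depending only on $N,\alpha,\beta,\lambda,\wp,m$ such that for all $r\in(s_0,\infty)$ $$r^{N+\beta}u^{\wp+1}(r)\le\begin{cases} C_1\, r^{-\frac{m(N+\beta)-(N+\alpha-m)(\wp+1)}{\wp-m+1}} & \text{if } N+\beta\ne\varrho\wp,\\ C_2\, r^{-\frac{(N+\alpha-m)(\wp+1)-(m-1)(N+\beta)}{m-1}} & \text{if } N+\beta=\varrho\wp.\end{cases}$$ Moreover, for all $r\in(s_0,\infty)$, $$\lambda\Big(\frac{N+\beta}{\wp+1}-\frac{N+\alpha-m}{m}\Big)\int_{s_0}^r s^{N+\beta-1}u^{\wp+1}(s)\,ds = -\frac{m-1}{m}r^{N+\alpha-1}|u'(r)|^{m-1}U_\varrho(r)+\frac{m-1}{m}s_0^{N+\alpha-1}|u'(s_0)|^{m-1}U_\varrho(s_0)+\frac{\lambda}{\wp+1}\big[r^{N+\beta}u^{\wp+1}(r)-s_0^{N+\beta}\big].$$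
   Context: A positive solution is a positive function $u\in C^1$ on $[s_0,\infty)$ satisfying the differential equation on $(s_0,\infty)$ (in the sense that $r^{N+\alpha-1}|u'|^{m-2}u'$ is $C^1$ there) together with the initial conditions. *)

theory Defs
  imports "HOL-Analysis.Analysis"
begin

text \<open>The flux  r^(N+alpha-1) |u'(r)|^(m-2) u'(r), with |0|^(m-2)*0 = 0.\<close>
definition flux :: "real \<Rightarrow> real \<Rightarrow> real \<Rightarrow> real \<Rightarrow> real \<Rightarrow> real" where
  "flux N \<alpha> m r v = r powr (N + \<alpha> - 1) * \<bar>v\<bar> powr (m - 2) * v"

definition positive_solution ::
  "real \<Rightarrow> real \<Rightarrow> real \<Rightarrow> real \<Rightarrow> real \<Rightarrow> real \<Rightarrow> real
     \<Rightarrow> (real \<Rightarrow> real) \<Rightarrow> (real \<Rightarrow> real) \<Rightarrow> bool" where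
  "positive_solution N m \<alpha> \<beta> lam p s0 u u' \<longleftrightarrow>
     (\<forall>r\<ge>s0. (u has_real_derivative u' r) (at r within {s0..})) \<and>
     continuous_on {s0..} u' \<and>
     (\<forall>r\<ge>s0. u r > 0) \<and>
     (\<exists>\<phi>'. (\<forall>r>s0. ((\<lambda>t. flux N \<alpha> m t (u' t)) has_real_derivative \<phi>' r) (at r)) \<and>
            continuous_on {s0<..} \<phi>' \<and>
            (\<forall>r>s0. - \<phi>' r = lam * r powr (N + \<beta> - 1) * u r powr p)) \<and>
     u s0 = 1 \<and> u' s0 \<le> 0"

end

theory Submission
  imports Defs
begin



lemma mvt_upper:
  fixes f f' :: "real \<Rightarrow> real"
  assumes "a \<le> b" "continuous_on {a..b} f"
    "\<And>x. a < x \<Longrightarrow> x < b \<Longrightarrow> (f has_real_derivative f' x) (at x)"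
    "\<And>x. a < x \<Longrightarrow> x < b \<Longrightarrow> f' x \<le> K"
  shows "f b - f a \<le> K * (b - a)"
proof -
  have "(\<lambda>x. K * x - f x) a \<le> (\<lambda>x. K * x - f x) b"
  proof (rule DERIV_nonneg_imp_increasing_open[OF assms(1)])
    fix x assume "a < x" "x < b"
    show "\<exists>y. ((\<lambda>x. K * x - f x) has_real_derivative y) (at x) \<and> 0 \<le> y"
      using assms(3,4)[OF \<open>a < x\<close> \<open>x < b\<close>]
      by (intro exI[of _ "K - f' x"]) (auto intro!: derivative_eq_intros)
  next
    show "continuous_on {a..b} (\<lambda>x. K * x - f x)"
      using assms(2) by (intro continuous_intros)
  qed
  then show ?thesis by (simp add: algebra_simps)
qed

lemma mvt_lower:
  fixes f f' :: "real \<Rightarrow> real"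
  assumes "a \<le> b" "continuous_on {a..b} f"
    "\<And>x. a < x \<Longrightarrow> x < b \<Longrightarrow> (f has_real_derivative f' x) (at x)"
    "\<And>x. a < x \<Longrightarrow> x < b \<Longrightarrow> K \<le> f' x"
  shows "K * (b - a) \<le> f b - f a"
proof -
  have "(\<lambda>x. - f x) b - (\<lambda>x. - f x) a \<le> (-K) * (b - a)"
    by (rule mvt_upper[where f'="\<lambda>x. - f' x"]) 
       (use assms in \<open>auto intro!: derivative_eq_intros continuous_intros\<close>)
  then show ?thesis by simp
qed

lemma gcont:
  fixes m :: real assumes "m > 1"
  shows "continuous_on UNIV (\<lambda>v::real. \<bar>v\<bar> powr (m - 2) * v)"
proof -
  have "isCont (\<lambda>v::real. \<bar>v\<bar> powr (m - 2) * v) x" for x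
  proof (cases "x = 0")
    case False
    show ?thesis unfolding isCont_def
      by (rule tendsto_mult[OF tendsto_powr'[OF tendsto_rabs[OF tendsto_ident_at] tendsto_const]])
         (use False in auto)
  next
    case True
    have "((\<lambda>v::real. \<bar>v\<bar> powr (m - 1)) \<longlongrightarrow> \<bar>0\<bar> powr (m - 1)) (at 0)"
      by (rule tendsto_powr'[OF tendsto_rabs[OF tendsto_ident_at] tendsto_const]) (use assms in auto)
    hence l: "((\<lambda>v::real. \<bar>v\<bar> powr (m - 1)) \<longlongrightarrow> 0) (at 0)" by simp
    have eq: "\<bar>\<bar>v\<bar> powr (m - 2) * v\<bar> = \<bar>v\<bar> powr (m - 1)" for v :: real
    proof (cases "v = 0")
      case False
      have "\<bar>v\<bar> powr (m - 2) * \<bar>v\<bar> = \<bar>v\<bar> powr (m - 2) * \<bar>v\<bar> powr 1" using False by simp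
      also have "\<dots> = \<bar>v\<bar> powr (m - 2 + 1)" by (simp only: powr_add)
      finally show ?thesis by (simp add: abs_mult)
    qed simp
    have "((\<lambda>v::real. \<bar>v\<bar> powr (m - 2) * v) \<longlongrightarrow> 0) (at 0)"
      by (rule tendsto_rabs_zero_cancel) (simp only: eq l)
    then show ?thesis using True unfolding isCont_def by simp
  qed
  then show ?thesis by (simp add: continuous_on_eq_continuous_at)
qed



definition c0f :: "nat \<Rightarrow> real \<Rightarrow> real \<Rightarrow> real \<Rightarrow> real \<Rightarrow> real" where
  "c0f N m \<alpha> \<beta> lam = (lam * min 1 (2 powr (N + \<beta> - 1)) / (2 * 2 powr (N + \<alpha> - 1))) powr (1 / (m - 1)) / 2"

definition Sf :: "nat \<Rightarrow> real \<Rightarrow> real \<Rightarrow> real \<Rightarrow> real \<Rightarrow> real \<Rightarrow> real" where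
  "Sf N m \<alpha> \<beta> lam p = (1 / (c0f N m \<alpha> \<beta> lam * (1 / (1 + 2 powr ((N + \<alpha> - 1) / (m - 1)))) powr (p / (m - 1) - 1)))
      powr (1 / (1 + (\<beta> - \<alpha> + 1) / (m - 1)))"

definition Kf :: "nat \<Rightarrow> real \<Rightarrow> real \<Rightarrow> real \<Rightarrow> real \<Rightarrow> real \<Rightarrow> real" where
  "Kf N m \<alpha> \<beta> lam p = max ((1 / c0f N m \<alpha> \<beta> lam) powr (1 / (p / (m - 1) - 1)) * 2 powr ((\<beta> - \<alpha> + m) / (p - m + 1)))
      ((2 * Sf N m \<alpha> \<beta> lam p) powr ((\<beta> - \<alpha> + m) / (p - m + 1)))"

locale psol =
  fixes N :: nat and m \<alpha> \<beta> lam p s0 :: real and u u' \<phi>' :: "real \<Rightarrow> real"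
  assumes m1: "m > 1" and apos: "real N + \<alpha> - m > 0" and ba: "\<beta> - \<alpha> + 1 > 0"
    and lam: "lam > 0" and pm: "p > m - 1" and s0: "s0 \<ge> 0"
    and uder: "\<forall>r\<ge>s0. (u has_real_derivative u' r) (at r within {s0..})"
    and u'c: "continuous_on {s0..} u'"
    and upos: "\<forall>r\<ge>s0. u r > 0"
    and fder: "\<forall>r>s0. ((\<lambda>t. flux N \<alpha> m t (u' t)) has_real_derivative \<phi>' r) (at r)"
    and eq: "\<forall>r>s0. - \<phi>' r = lam * r powr (N + \<beta> - 1) * u r powr p"
    and u0: "u s0 = 1" and u'0: "u' s0 \<le> 0"
begin

lemma u_cont: "continuous_on {s0..} u"
  by (rule DERIV_continuous_on) (use uder in auto)

lemma u_der: "r > s0 \<Longrightarrow> (u has_real_derivative u' r) (at r)"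
proof -
  assume r: "r > s0"
  have "at r within {s0..} = at r" by (rule at_within_interior) (simp add: interior_real_atLeast r)
  then show ?thesis using uder r by (metis less_imp_le)
qed

lemma flux_cont: "continuous_on {s0..} (\<lambda>t. flux N \<alpha> m t (u' t))"
proof -
  have "continuous_on {s0..} (\<lambda>t. t powr (N + \<alpha> - 1) * (\<lambda>v. \<bar>v\<bar> powr (m - 2) * v) (u' t))"
  proof (rule continuous_on_mult)
    show "continuous_on {s0..} (\<lambda>t. t powr (N + \<alpha> - 1))"
      by (rule continuous_on_powr') (use s0 apos m1 in \<open>auto intro!: continuous_intros\<close>)
    show "continuous_on {s0..} (\<lambda>t. \<bar>u' t\<bar> powr (m - 2) * u' t)"
      using continuous_on_compose[OF u'c continuous_on_subset[OF gcont[OF m1]]] by (simp add: o_def)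
  qed
  then show ?thesis by (simp add: flux_def mult.assoc)
qed

definition psi where "psi t = - flux N \<alpha> m t (u' t)"

lemma psi_cont: "continuous_on {s0..} psi"
  unfolding psi_def by (intro continuous_intros flux_cont)

lemma psi_der: "r > s0 \<Longrightarrow> (psi has_real_derivative lam * r powr (N + \<beta> - 1) * u r powr p) (at r)"
proof -
  assume r: "r > s0"
  have "(psi has_real_derivative - \<phi>' r) (at r)"
    unfolding psi_def using fder r by (auto intro!: derivative_eq_intros)
  then show ?thesis using eq r by simp
qed

lemma psi_der_pos: "r > s0 \<Longrightarrow> lam * r powr (N + \<beta> - 1) * u r powr p > 0"
proof -
  assume r: "r > s0"
  have "u r > 0" using upos r by auto
  then show ?thesis using lam s0 r by (intro mult_pos_pos) auto
qed

lemma psi_strict: "s0 \<le> x \<Longrightarrow> x < y \<Longrightarrow> psi x < psi y"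
proof -
  assume xy: "s0 \<le> x" "x < y"
  show "psi x < psi y"
  proof (rule DERIV_pos_imp_increasing_open[OF xy(2)])
    fix z assume z: "x < z" "z < y"
    then have "z > s0" using xy by auto
    then show "\<exists>d. (psi has_real_derivative d) (at z) \<and> 0 < d"
      using psi_der psi_der_pos by blast
  next
    show "continuous_on {x..y} psi"
      by (rule continuous_on_subset[OF psi_cont]) (use xy in auto)
  qed
qed

lemma psi_mono: "s0 \<le> x \<Longrightarrow> x \<le> y \<Longrightarrow> psi x \<le> psi y"
  using psi_strict by (cases "x = y") (auto intro: less_imp_le)

lemma psi_s0: "psi s0 \<ge> 0"
proof -
  have "s0 powr (N + \<alpha> - 1) * \<bar>u' s0\<bar> powr (m - 2) * u' s0 \<le> 0"
    by (rule mult_nonneg_nonpos) (use u'0 in auto)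
  then show ?thesis by (simp add: psi_def flux_def)
qed

lemma psi_nonneg: "t \<ge> s0 \<Longrightarrow> psi t \<ge> 0"
  using psi_s0 psi_mono[of s0 t] by auto

lemma psi_pos: "t > s0 \<Longrightarrow> psi t > 0"
  using psi_s0 psi_strict[of s0 t] by auto

lemma u'_neg: "t > s0 \<Longrightarrow> u' t < 0"
proof (rule ccontr)
  assume t: "t > s0" and "\<not> u' t < 0"
  hence "t powr (N + \<alpha> - 1) * \<bar>u' t\<bar> powr (m - 2) * u' t \<ge> 0" by auto
  with psi_pos[OF t] show False by (simp add: psi_def flux_def)
qed

lemma u'_nonpos: "t \<ge> s0 \<Longrightarrow> u' t \<le> 0"
proof -
  assume t: "t \<ge> s0"
  show ?thesis
  proof (cases "t = s0")
    case False then show ?thesis using t less_imp_le[OF u'_neg[of t]] by auto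
  qed (use u'0 in auto)
qed

lemma psi_eq: "t \<ge> s0 \<Longrightarrow> psi t = t powr (N + \<alpha> - 1) * \<bar>u' t\<bar> powr (m - 1)"
proof -
  assume t: "t \<ge> s0"
  have "- (\<bar>u' t\<bar> powr (m - 2) * u' t) = \<bar>u' t\<bar> powr (m - 1)"
  proof (cases "u' t = 0")
    case False
    have "\<bar>u' t\<bar> powr (m - 2) * \<bar>u' t\<bar> = \<bar>u' t\<bar> powr (m - 2) * \<bar>u' t\<bar> powr 1" using False by simp
    also have "\<dots> = \<bar>u' t\<bar> powr (m - 2 + 1)" by (simp only: powr_add)
    finally show ?thesis using u'_nonpos[OF t] by simp
  qed simp
  then show ?thesis unfolding psi_def flux_def
    by (metis mult.assoc mult_minus_right)
qed

lemma abs_u': "t \<ge> s0 \<Longrightarrow> t > 0 \<Longrightarrow> \<bar>u' t\<bar> = (psi t / t powr (N + \<alpha> - 1)) powr (1 / (m - 1))"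
proof -
  assume t: "t \<ge> s0" "t > 0"
  have "psi t / t powr (N + \<alpha> - 1) = \<bar>u' t\<bar> powr (m - 1)" using psi_eq[OF t(1)] t(2) by simp
  also have "\<dots> powr (1 / (m - 1)) = \<bar>u' t\<bar>" using m1 by (simp add: powr_powr)
  finally show ?thesis by simp
qed

lemma u_mono: "s0 \<le> x \<Longrightarrow> x \<le> y \<Longrightarrow> u y \<le> u x"
proof -
  assume xy: "s0 \<le> x" "x \<le> y"
  have "u y - u x \<le> 0 * (y - x)"
  proof (rule mvt_upper[where f'=u'])
    show "continuous_on {x..y} u" by (rule continuous_on_subset[OF u_cont]) (use xy in auto)
  qed (use xy u_der u'_neg in \<open>auto intro: less_imp_le\<close>)
  then show ?thesis by simp
qed

lemma u_le1: "t \<ge> s0 \<Longrightarrow> u t \<le> 1"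
  using u_mono[of s0 t] u0 by simp


lemma core1:
  assumes A: "A \<ge> s0" "A > 0"
  shows "u (2 * A) \<le> u (3 * A / 2) - (A / 2) * (psi (3 * A / 2) / (2 * A) powr (N + \<alpha> - 1)) powr (1 / (m - 1))"
proof -
  define L where "L = (psi (3 * A / 2) / (2 * A) powr (N + \<alpha> - 1)) powr (1 / (m - 1))"
  have "u (2 * A) - u (3 * A / 2) \<le> (- L) * (2 * A - 3 * A / 2)"
  proof (rule mvt_upper[where f'=u'])
    show "continuous_on {3 * A / 2..2 * A} u" by (rule continuous_on_subset[OF u_cont]) (use A in auto)
  next
    fix t assume t: "3 * A / 2 < t" "t < 2 * A"
    then have ts: "t > s0" "t > 0" using A by auto
    show "(u has_real_derivative u' t) (at t)" using u_der ts by auto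
    have X: "psi (3 * A / 2) / (2 * A) powr (N + \<alpha> - 1) \<le> psi t / t powr (N + \<alpha> - 1)"
    proof (rule frac_le)
      show "0 \<le> psi t" using psi_nonneg ts by auto
      show "psi (3 * A / 2) \<le> psi t" using psi_mono[of "3 * A / 2" t] t A by auto
      show "0 < t powr (N + \<alpha> - 1)" using ts by auto
      show "t powr (N + \<alpha> - 1) \<le> (2 * A) powr (N + \<alpha> - 1)"
        by (rule powr_mono2) (use t ts apos m1 in auto)
    qed
    have "L \<le> \<bar>u' t\<bar>" unfolding L_def abs_u'[OF less_imp_le[OF ts(1)] ts(2)]
      by (rule powr_mono2[OF _ _ X]) (use m1 A psi_nonneg in auto)
    then show "u' t \<le> - L" using u'_neg[OF ts(1)] by auto
  qed (use A in auto)
  then show ?thesis unfolding L_def by (simp add: algebra_simps)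
qed

lemma core2:
  assumes A: "A \<ge> s0" "A > 0"
  shows "u A - u (3 * A / 2) \<le> (A / 2) * (2 powr ((N + \<alpha> - 1) / (m - 1)) * (psi (3 * A / 2) / (2 * A) powr (N + \<alpha> - 1)) powr (1 / (m - 1)))"
proof -
  define L where "L = (psi (3 * A / 2) / (2 * A) powr (N + \<alpha> - 1)) powr (1 / (m - 1))"
  have LL: "(psi (3 * A / 2) / A powr (N + \<alpha> - 1)) powr (1 / (m - 1)) = 2 powr ((N + \<alpha> - 1) / (m - 1)) * L"
  proof -
    define X where "X = psi (3 * A / 2) / (2 * A) powr (N + \<alpha> - 1)"
    have e1: "psi (3 * A / 2) / A powr (N + \<alpha> - 1) = 2 powr (N + \<alpha> - 1) * X"
      using A unfolding X_def by (simp add: powr_mult)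
    have "(2 powr (N + \<alpha> - 1) * X) powr (1 / (m - 1)) = (2 powr (N + \<alpha> - 1)) powr (1 / (m - 1)) * X powr (1 / (m - 1))"
      by (rule powr_mult)
    also have "\<dots> = 2 powr ((N + \<alpha> - 1) / (m - 1)) * X powr (1 / (m - 1))"
      by (simp only: powr_powr) simp
    finally show ?thesis unfolding e1 L_def X_def .
  qed
  have "(- (2 powr ((N + \<alpha> - 1) / (m - 1)) * L)) * (3 * A / 2 - A) \<le> u (3 * A / 2) - u A"
  proof (rule mvt_lower[where f'=u'])
    show "continuous_on {A..3 * A / 2} u" by (rule continuous_on_subset[OF u_cont]) (use A in auto)
  next
    fix t assume t: "A < t" "t < 3 * A / 2"
    then have ts: "t > s0" "t > 0" using A by auto
    show "(u has_real_derivative u' t) (at t)" using u_der ts by auto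
    have X: "psi t / t powr (N + \<alpha> - 1) \<le> psi (3 * A / 2) / A powr (N + \<alpha> - 1)"
    proof (rule frac_le)
      show "0 \<le> psi (3 * A / 2)" using psi_nonneg A by auto
      show "psi t \<le> psi (3 * A / 2)" using psi_mono[of t "3 * A / 2"] t ts by auto
      show "0 < A powr (N + \<alpha> - 1)" using A by auto
      show "A powr (N + \<alpha> - 1) \<le> t powr (N + \<alpha> - 1)"
        by (rule powr_mono2) (use t A apos m1 in auto)
    qed
    have "\<bar>u' t\<bar> \<le> 2 powr ((N + \<alpha> - 1) / (m - 1)) * L" unfolding LL[symmetric] abs_u'[OF less_imp_le[OF ts(1)] ts(2)]
      by (rule powr_mono2[OF _ _ X]) (use m1 ts psi_nonneg in auto)
    then show "- (2 powr ((N + \<alpha> - 1) / (m - 1)) * L) \<le> u' t" by auto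
  qed (use A in auto)
  then show ?thesis unfolding L_def by (simp add: algebra_simps)
qed

lemma core3:
  assumes A: "A \<ge> s0" "A > 0"
  shows "psi (3 * A / 2) \<ge> (lam * min 1 (2 powr (N + \<beta> - 1)) * A powr (N + \<beta> - 1) * u (3 * A / 2) powr p) * (A / 2)"
proof -
  define K where "K = lam * min 1 (2 powr (N + \<beta> - 1)) * A powr (N + \<beta> - 1) * u (3 * A / 2) powr p"
  have "K * (3 * A / 2 - A) \<le> psi (3 * A / 2) - psi A"
  proof (rule mvt_lower[where f'="\<lambda>t. lam * t powr (N + \<beta> - 1) * u t powr p"])
    show "continuous_on {A..3 * A / 2} psi" by (rule continuous_on_subset[OF psi_cont]) (use A in auto)
  next
    fix t assume t: "A < t" "t < 3 * A / 2"
    then have ts: "t > s0" "t > 0" using A by auto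
    show "(psi has_real_derivative lam * t powr (N + \<beta> - 1) * u t powr p) (at t)" using psi_der ts by auto
    have tb: "min 1 (2 powr (N + \<beta> - 1)) * A powr (N + \<beta> - 1) \<le> t powr (N + \<beta> - 1)"
    proof (cases "N + \<beta> - 1 \<ge> 0")
      case True
      have "A powr (N + \<beta> - 1) \<le> t powr (N + \<beta> - 1)" by (rule powr_mono2) (use True t A in auto)
      moreover have "min 1 (2 powr (N + \<beta> - 1)) * A powr (N + \<beta> - 1) \<le> A powr (N + \<beta> - 1)"
        using A by (intro mult_left_le_one_le) auto
      ultimately show ?thesis by linarith
    next
      case False
      have "(2 * A) powr (N + \<beta> - 1) \<le> t powr (N + \<beta> - 1)" by (rule powr_mono2') (use False t A in auto)
      moreover have "min 1 (2 powr (N + \<beta> - 1)) * A powr (N + \<beta> - 1) \<le> (2 * A) powr (N + \<beta> - 1)"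
        using A by (simp add: powr_mult mult_right_mono)
      ultimately show ?thesis by linarith
    qed
    have tu: "u (3 * A / 2) powr p \<le> u t powr p"
      by (rule powr_mono2) (use pm m1 u_mono[of t "3 * A / 2"] upos[rule_format, of "3 * A / 2"] ts t A in auto)
    have "(min 1 (2 powr (N + \<beta> - 1)) * A powr (N + \<beta> - 1)) * u (3 * A / 2) powr p \<le> t powr (N + \<beta> - 1) * u t powr p"
      by (rule mult_mono[OF tb tu]) auto
    then show "K \<le> lam * t powr (N + \<beta> - 1) * u t powr p" unfolding K_def using lam
      by (metis (no_types, lifting) mult.assoc mult_le_cancel_left_pos)
  qed (use A in auto)
  then show ?thesis using psi_nonneg[of A] A unfolding K_def by (simp add: algebra_simps)
qed


lemma core4:
  assumes A: "A \<ge> s0" "A > 0"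
  shows "(A / 2) * (psi (3 * A / 2) / (2 * A) powr (N + \<alpha> - 1)) powr (1 / (m - 1)) \<ge>
    (lam * min 1 (2 powr (N + \<beta> - 1)) / (2 * 2 powr (N + \<alpha> - 1))) powr (1 / (m - 1)) / 2
     * A powr (1 + (\<beta> - \<alpha> + 1) / (m - 1)) * u (3 * A / 2) powr (p / (m - 1))"
proof -
  define v where "v = u (3 * A / 2)"
  define k where "k = lam * min 1 (2 powr (N + \<beta> - 1)) / (2 * 2 powr (N + \<alpha> - 1))"
  define e where "e = 1 / (m - 1)"
  have v: "v > 0" unfolding v_def using upos A by auto
  have k: "k > 0" unfolding k_def using lam by auto
  have e: "e > 0" unfolding e_def using m1 by auto
  have Aeq: "A powr (\<beta> - \<alpha> + 1) = A powr (N + \<beta> - 1) * A / A powr (N + \<alpha> - 1)"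
  proof -
    have "A powr (\<beta> - \<alpha> + 1) = A powr ((N + \<beta> - 1) + 1 - (N + \<alpha> - 1))" by (simp add: algebra_simps)
    also have "\<dots> = A powr (N + \<beta> - 1) * A powr 1 / A powr (N + \<alpha> - 1)" by (simp only: powr_diff powr_add)
    finally show ?thesis using A by simp
  qed
  have "(lam * min 1 (2 powr (N + \<beta> - 1)) * A powr (N + \<beta> - 1) * v powr p) * (A / 2) / (2 * A) powr (N + \<alpha> - 1)
     = k * (A powr (\<beta> - \<alpha> + 1) * v powr p)"
    unfolding Aeq k_def using A by (simp add: powr_mult field_simps)
  then have X: "k * (A powr (\<beta> - \<alpha> + 1) * v powr p) \<le> psi (3 * A / 2) / (2 * A) powr (N + \<alpha> - 1)"
    using core3[OF A] A unfolding v_def[symmetric] by (metis divide_right_mono powr_ge_zero)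
  have "(k * (A powr (\<beta> - \<alpha> + 1) * v powr p)) powr e \<le> (psi (3 * A / 2) / (2 * A) powr (N + \<alpha> - 1)) powr e"
    by (rule powr_mono2[OF _ _ X]) (use e k v A in auto)
  moreover have "(k * (A powr (\<beta> - \<alpha> + 1) * v powr p)) powr e = k powr e * A powr ((\<beta> - \<alpha> + 1) * e) * v powr (p * e)"
    by (simp add: powr_mult powr_powr)
  ultimately have Y: "k powr e * A powr ((\<beta> - \<alpha> + 1) * e) * v powr (p * e) \<le> (psi (3 * A / 2) / (2 * A) powr (N + \<alpha> - 1)) powr e"
    by simp
  have Z: "A powr (1 + (\<beta> - \<alpha> + 1) / (m - 1)) = A * A powr ((\<beta> - \<alpha> + 1) * e)"
    unfolding e_def using A by (simp add: powr_add)
  have "k powr e / 2 * A powr (1 + (\<beta> - \<alpha> + 1) / (m - 1)) * v powr (p * e)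
      = (A / 2) * (k powr e * A powr ((\<beta> - \<alpha> + 1) * e) * v powr (p * e))"
    unfolding Z by simp
  also have "\<dots> \<le> (A / 2) * (psi (3 * A / 2) / (2 * A) powr (N + \<alpha> - 1)) powr e"
    by (rule mult_left_mono[OF Y]) (use A in auto)
  finally show ?thesis unfolding v_def k_def e_def by simp
qed


lemma c0_pos: "c0f N m \<alpha> \<beta> lam > 0"
proof -
  have h: "min 1 (2 powr (real N + \<beta> - 1)) > 0" by simp
  have "lam * min 1 (2 powr (real N + \<beta> - 1)) / (2 * 2 powr (real N + \<alpha> - 1)) > 0"
    using lam h by (intro divide_pos_pos mult_pos_pos) auto
  then have "... \<noteq> 0" by linarith
  then show ?thesis unfolding c0f_def by (intro divide_pos_pos) (simp_all only: powr_gt_zero, simp)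
qed

lemma kappa_theta: "(1 + (\<beta> - \<alpha> + 1) / (m - 1)) / (p / (m - 1) - 1) = (\<beta> - \<alpha> + m) / (p - m + 1)"
proof -
  have h1: "1 + (\<beta> - \<alpha> + 1) / (m - 1) = (\<beta> - \<alpha> + m) / (m - 1)" using m1 by (simp add: field_simps)
  have h2: "p / (m - 1) - 1 = (p - m + 1) / (m - 1)" using m1 by (simp add: field_simps)
  show ?thesis unfolding h1 h2 using m1 pm by simp
qed

lemma key_ineq:
  assumes A: "A \<ge> s0" "A > 0"
  shows "c0f N m \<alpha> \<beta> lam * A powr (1 + (\<beta> - \<alpha> + 1) / (m - 1)) * u (3 * A / 2) powr (p / (m - 1) - 1) < 1"
proof -
  define v where "v = u (3 * A / 2)"
  define P where "P = (A / 2) * (psi (3 * A / 2) / (2 * A) powr (N + \<alpha> - 1)) powr (1 / (m - 1))"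
  have v: "v > 0" unfolding v_def using upos A by auto
  have "0 < u (2 * A)" using upos A by auto
  then have Pv: "P < v" using core1[OF A] unfolding P_def v_def by linarith
  have "c0f N m \<alpha> \<beta> lam * A powr (1 + (\<beta> - \<alpha> + 1) / (m - 1)) * v powr (p / (m - 1)) \<le> P"
    using core4[OF A] unfolding P_def v_def c0f_def by simp
  also have "v powr (p / (m - 1)) = v powr (p / (m - 1) - 1) * v"
    using v by (simp add: powr_diff)
  finally have "c0f N m \<alpha> \<beta> lam * A powr (1 + (\<beta> - \<alpha> + 1) / (m - 1)) * v powr (p / (m - 1) - 1) * v < 1 * v"
    using Pv by (simp add: mult.assoc)
  then show ?thesis unfolding v_def[symmetric] using v by (simp only: mult_less_cancel_right)
qed

lemma decayA:
  assumes r: "r > s0" "r \<ge> 2 * s0"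
  shows "u r \<le> (1 / c0f N m \<alpha> \<beta> lam) powr (1 / (p / (m - 1) - 1)) * 2 powr ((\<beta> - \<alpha> + m) / (p - m + 1))
              * r powr (- ((\<beta> - \<alpha> + m) / (p - m + 1)))"
proof -
  define A where "A = r / 2"
  define c where "c = c0f N m \<alpha> \<beta> lam"
  define \<kappa> where "\<kappa> = 1 + (\<beta> - \<alpha> + 1) / (m - 1)"
  define q1 where "q1 = p / (m - 1) - 1"
  define \<theta> where "\<theta> = (\<beta> - \<alpha> + m) / (p - m + 1)"
  have A: "A \<ge> s0" "A > 0" using r s0 unfolding A_def by auto
  have c: "c > 0" unfolding c_def by (rule c0_pos)
  have q1: "q1 > 0" unfolding q1_def using m1 pm by (simp add: field_simps)
  have th: "\<kappa> / q1 = \<theta>" unfolding \<kappa>_def q1_def \<theta>_def by (rule kappa_theta)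
  define v where "v = u (3 * A / 2)"
  have v: "v > 0" unfolding v_def using upos A by auto
  have ur: "u r \<le> v" unfolding v_def A_def using u_mono[of "3 * (r / 2) / 2" r] r s0 by auto
  have "c * A powr \<kappa> * v powr q1 < 1" using key_ineq[OF A] unfolding c_def \<kappa>_def q1_def v_def .
  then have "v powr q1 < 1 / (c * A powr \<kappa>)" using c A by (simp add: field_simps)
  then have "(v powr q1) powr (1 / q1) < (1 / (c * A powr \<kappa>)) powr (1 / q1)"
    by (rule powr_less_mono2[rotated 2]) (use q1 in auto)
  also have "(v powr q1) powr (1 / q1) = v" using q1 v by (simp add: powr_powr)
  also have "(1 / (c * A powr \<kappa>)) powr (1 / q1) = (1 / c) powr (1 / q1) * (A powr \<kappa>) powr (- (1 / q1))"
    using c A by (simp add: powr_mult powr_minus_divide powr_divide)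
  also have "(A powr \<kappa>) powr (- (1 / q1)) = A powr (- \<theta>)"
    using th[symmetric] by (simp add: powr_powr)
  also have "A powr (- \<theta>) = 2 powr \<theta> * r powr (- \<theta>)"
    unfolding A_def using r s0 by (simp add: powr_divide powr_minus_divide)
  finally show ?thesis using ur unfolding c_def q1_def \<theta>_def by (simp add: mult.assoc)
qed

lemma s0_bound:
  assumes "s0 > 0"
  shows "s0 \<le> Sf N m \<alpha> \<beta> lam p"
proof -
  define A where "A = s0"
  define c where "c = c0f N m \<alpha> \<beta> lam"
  define \<kappa> where "\<kappa> = 1 + (\<beta> - \<alpha> + 1) / (m - 1)"
  define q1 where "q1 = p / (m - 1) - 1"
  define \<delta> where "\<delta> = 1 / (1 + 2 powr ((N + \<alpha> - 1) / (m - 1)))"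
  have A: "A \<ge> s0" "A > 0" using assms unfolding A_def by auto
  have c: "c > 0" unfolding c_def by (rule c0_pos)
  have q1: "q1 > 0" unfolding q1_def using m1 pm by (simp add: field_simps)
  have \<kappa>: "\<kappa> > 0" unfolding \<kappa>_def using m1 ba by (simp add: add_pos_pos)
  define v where "v = u (3 * A / 2)"
  define P where "P = (A / 2) * (psi (3 * A / 2) / (2 * A) powr (N + \<alpha> - 1)) powr (1 / (m - 1))"
  have v: "v > 0" unfolding v_def using upos A by auto
  have "0 < u (2 * A)" using upos A by auto
  then have Pv: "P < v" using core1[OF A] unfolding P_def v_def by linarith
  have "1 - v \<le> 2 powr ((N + \<alpha> - 1) / (m - 1)) * P"
    using core2[OF A] u0 unfolding P_def v_def A_def by (simp add: algebra_simps)
  also have "\<dots> \<le> 2 powr ((N + \<alpha> - 1) / (m - 1)) * v" using Pv by (intro mult_left_mono) auto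
  finally have "1 \<le> (1 + 2 powr ((N + \<alpha> - 1) / (m - 1))) * v" by (simp add: algebra_simps)
  then have dv: "\<delta> \<le> v" unfolding \<delta>_def by (simp add: field_simps add_pos_pos)
  have \<delta>: "\<delta> > 0" unfolding \<delta>_def by (simp add: add_pos_pos)
  have "c * A powr \<kappa> * \<delta> powr q1 \<le> c * A powr \<kappa> * v powr q1"
    using powr_mono2[OF less_imp_le[OF q1] less_imp_le[OF \<delta>] dv] c A by (intro mult_left_mono) auto
  also have "\<dots> < 1" using key_ineq[OF A] unfolding c_def \<kappa>_def q1_def v_def .
  finally have "A powr \<kappa> < 1 / (c * \<delta> powr q1)" using c \<delta> by (simp add: field_simps)
  then have "(A powr \<kappa>) powr (1 / \<kappa>) < (1 / (c * \<delta> powr q1)) powr (1 / \<kappa>)"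
    by (rule powr_less_mono2[rotated 2]) (use \<kappa> in auto)
  also have "(A powr \<kappa>) powr (1 / \<kappa>) = A" using \<kappa> A by (simp add: powr_powr)
  finally show ?thesis unfolding Sf_def A_def c_def \<delta>_def q1_def \<kappa>_def by simp
qed

lemma decay:
  assumes r: "r > s0"
  shows "u r \<le> Kf N m \<alpha> \<beta> lam p * r powr (- ((\<beta> - \<alpha> + m) / (p - m + 1)))"
proof -
  define \<theta> where "\<theta> = (\<beta> - \<alpha> + m) / (p - m + 1)"
  have th: "\<theta> > 0" unfolding \<theta>_def using ba pm m1 by auto
  have rp: "r > 0" using r s0 by auto
  show ?thesis
  proof (cases "r \<ge> 2 * s0")
    case True
    show ?thesis using decayA[OF r True] unfolding Kf_def \<theta>_def[symmetric]
      by (rule order_trans) (intro mult_right_mono, auto)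
  next
    case False
    then have s0p: "s0 > 0" using r by auto
    define S where "S = Sf N m \<alpha> \<beta> lam p"
    have S: "s0 \<le> S" unfolding S_def by (rule s0_bound[OF s0p])
    have rS: "r \<le> 2 * S" using False S by auto
    have "u r \<le> 1" using u_le1 r by auto
    also have "1 = (2 * S) powr \<theta> * (2 * S) powr (- \<theta>)" using S s0p by (simp add: powr_minus)
    also have "\<dots> \<le> (2 * S) powr \<theta> * r powr (- \<theta>)"
      by (intro mult_left_mono powr_mono2') (use th rp rS in auto)
    also have "\<dots> \<le> Kf N m \<alpha> \<beta> lam p * r powr (- \<theta>)"
      unfolding Kf_def S_def \<theta>_def by (intro mult_right_mono) auto
    finally show ?thesis unfolding \<theta>_def .
  qed
qed


lemma ident2:
  assumes r: "r > s0"
  shows "r powr (- ((real N + \<alpha> - m) / (m - 1))) * psi r powr (m / (m - 1) - 1) = r * \<bar>u' r\<bar>"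
proof -
  define e where "e = 1 / (m - 1)"
  define a where "a = real N + \<alpha> - 1"
  have rp: "r > 0" using r s0 by auto
  have ps: "psi r > 0" using psi_pos r by auto
  have w: "\<bar>u' r\<bar> = psi r powr e / r powr (a * e)"
    using abs_u'[of r] r rp unfolding e_def a_def by (simp add: powr_divide powr_powr)
  have h1: "- ((real N + \<alpha> - m) / (m - 1)) = 1 - a * e" unfolding a_def e_def using m1 by (simp add: field_simps)
  have h2: "m / (m - 1) - 1 = e" unfolding e_def using m1 by (simp add: field_simps)
  have "r powr (1 - a * e) = r / r powr (a * e)" using rp by (simp add: powr_diff)
  then show ?thesis unfolding h1 h2 w by simp
qed

lemma ident1:
  assumes r: "r > s0"
  shows "r powr (- ((real N + \<alpha> - m) / (m - 1)) - 1) * psi r powr (m / (m - 1)) = psi r * \<bar>u' r\<bar>"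
proof -
  have rp: "r > 0" using r s0 by auto
  have ps: "psi r > 0" using psi_pos r by auto
  have a: "r powr (- ((real N + \<alpha> - m) / (m - 1)) - 1) = r powr (- ((real N + \<alpha> - m) / (m - 1))) / r"
    using rp by (simp add: powr_diff)
  have b: "psi r powr (m / (m - 1)) = psi r powr (m / (m - 1) - 1) * psi r"
    using ps by (simp add: powr_diff)
  have "r powr (- ((real N + \<alpha> - m) / (m - 1))) / r * (psi r powr (m / (m - 1) - 1) * psi r)
     = (r powr (- ((real N + \<alpha> - m) / (m - 1))) * psi r powr (m / (m - 1) - 1)) * psi r / r"
    by simp
  also have "\<dots> = psi r * \<bar>u' r\<bar>" unfolding ident2[OF r] using rp by simp
  finally show ?thesis unfolding a b .
qed

end


lemma alg_id:
  fixes m p lam \<rho> Na Nb X1 Y X0 Y1 \<psi> w uu uu' r R U Rn Up1 Upm :: real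
  assumes m: "m > 1" and p: "p + 1 \<noteq> 0" and h1: "X1 * Y = \<psi> * w" and h2: "X0 * Y1 = r * w"
    and h3: "uu' = - w" and h4: "Rn = r * R" and h5: "Up1 = U * uu" and h6: "Upm = U"
    and h7: "\<rho> = (Na - m) / (m - 1)"
  shows "- (m - 1) / m * (\<rho> * (lam * R * U * uu + uu' * \<psi>) - (- \<rho> * X1 * Y + m / (m - 1) * Y1 * (lam * R * U) * X0))
     + lam / (p + 1) * (Nb * R * Up1 + (p + 1) * Upm * uu' * Rn) = lam * (Nb / (p + 1) - (Na - m) / m) * (R * Up1)"
proof -
  have a: "- \<rho> * X1 * Y = - \<rho> * (\<psi> * w)" using h1 by (simp add: mult.assoc)
  have b: "m / (m - 1) * Y1 * (lam * R * U) * X0 = m / (m - 1) * (lam * R * U) * (r * w)"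
    using h2 by (metis mult.assoc mult.commute)
  have m0: "m \<noteq> 0" "m - 1 \<noteq> 0" using m by auto
  have c: "- (m - 1) / m * (\<rho> * (lam * R * U * uu + uu' * \<psi>) - (- \<rho> * (\<psi> * w) + m / (m - 1) * (lam * R * U) * (r * w)))
      = - (m - 1) / m * \<rho> * (lam * R * U * uu) + lam * R * U * r * w"
    unfolding h3 using m0 by (simp add: field_simps)
  have d: "(m - 1) / m * \<rho> = (Na - m) / m" unfolding h7 using m0 by simp
  have e: "lam / (p + 1) * (Nb * R * Up1 + (p + 1) * Upm * uu' * Rn) = lam / (p + 1) * Nb * R * U * uu - lam * U * w * r * R"
    unfolding h3 h4 h5 h6 using p by (simp add: field_simps)
  have e0: "- (m - 1) / m * \<rho> = - ((Na - m) / m)"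
  proof -
    have "- (m - 1) / m * \<rho> = - ((m - 1) / m * \<rho>)" using m0 by (simp add: field_simps)
    then show ?thesis using d by simp
  qed
  have d': "- (m - 1) / m * \<rho> * X = - ((Na - m) / m) * X" for X by (simp only: e0)
  show ?thesis unfolding a b c e unfolding h5 d' by (simp add: algebra_simps)
qed
context psol
begin

lemma G_der:
  assumes r: "r > s0"
  shows "((\<lambda>x. - (m - 1) / m * ((real N + \<alpha> - m) / (m - 1) * (psi x * u x)
            - x powr (- ((real N + \<alpha> - m) / (m - 1))) * psi x powr (m / (m - 1)))
          + lam / (p + 1) * (x powr (real N + \<beta>) * u x powr (p + 1)))
     has_real_derivative lam * ((N + \<beta>) / (p + 1) - (N + \<alpha> - m) / m) * (r powr (N + \<beta> - 1) * u r powr (p + 1))) (at r)"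
proof -
  have rp: "r > 0" using r s0 by auto
  have ps: "psi r > 0" using psi_pos r by auto
  have ur: "u r > 0" using upos r by auto
  note D1 = has_real_derivative_powr[OF rp, of "- ((real N + \<alpha> - m) / (m - 1))"]
  note D2 = DERIV_fun_powr[OF psi_der[OF r] ps, of "m / (m - 1)"]
  note D3 = has_real_derivative_powr[OF rp, of "real N + \<beta>"]
  note D4 = DERIV_fun_powr[OF u_der[OF r] ur, of "p + 1"]
  note D = DERIV_add[OF DERIV_cmult[OF DERIV_diff[OF DERIV_cmult[OF DERIV_mult[OF psi_der[OF r] u_der[OF r]]] DERIV_mult[OF D1 D2]]] DERIV_cmult[OF DERIV_mult[OF D3 D4]], of "- (m - 1) / m" "(real N + \<alpha> - m) / (m - 1)" "lam / (p + 1)"]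
  have h4: "r powr (real N + \<beta>) = r * r powr (real N + \<beta> - 1)"
  proof -
    have "r powr (real N + \<beta>) = r powr ((real N + \<beta> - 1) + 1)" by simp
    also have "\<dots> = r powr (real N + \<beta> - 1) * r powr 1" by (rule powr_add)
    finally show ?thesis using rp by simp
  qed
  have h5: "u r powr (p + 1) = u r powr p * u r"
    using ur by (simp add: powr_add)
  show ?thesis
  proof (rule DERIV_cong[OF D])
    show "- (m - 1) / m *
    ((real N + \<alpha> - m) / (m - 1) * (lam * r powr (real N + \<beta> - 1) * u r powr p * u r + u' r * psi r) -
     (- ((real N + \<alpha> - m) / (m - 1)) * r powr (- ((real N + \<alpha> - m) / (m - 1)) - 1) * psi r powr (m / (m - 1)) +
      m / (m - 1) * psi r powr (m / (m - 1) - real 1) * (lam * r powr (real N + \<beta> - 1) * u r powr p) *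
      r powr - ((real N + \<alpha> - m) / (m - 1)))) +
    lam / (p + 1) *
    ((real N + \<beta>) * r powr (real N + \<beta> - 1) * u r powr (p + 1) +
     (p + 1) * u r powr (p + 1 - real 1) * u' r * r powr (real N + \<beta>)) =
    lam * ((real N + \<beta>) / (p + 1) - (real N + \<alpha> - m) / m) * (r powr (real N + \<beta> - 1) * u r powr (p + 1))"
      by (rule alg_id[where \<psi>="psi r" and w="\<bar>u' r\<bar>"])
         (use m1 pm ident1[OF r] ident2[OF r] u'_neg[OF r] h4 h5 in auto)
  qed
qed

definition Ff where
  "Ff x = - (m - 1) / m * x powr (N + \<alpha> - 1) * \<bar>u' x\<bar> powr (m - 1) * (x * u' x + ((real N + \<alpha> - m) / (m - 1)) * u x)
     + lam / (p + 1) * (x powr (N + \<beta>) * u x powr (p + 1))"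

lemma ring1: "(k::real) * P * (r * - w + q * U) = k * (q * (P * U) - r * w * P)"
  by (simp add: algebra_simps)

lemma F_eq_G:
  assumes r: "r > s0"
  shows "Ff r = - (m - 1) / m * ((real N + \<alpha> - m) / (m - 1) * (psi r * u r)
            - r powr (- ((real N + \<alpha> - m) / (m - 1))) * psi r powr (m / (m - 1)))
          + lam / (p + 1) * (r powr (real N + \<beta>) * u r powr (p + 1))"
proof -
  have ps: "psi r > 0" using psi_pos r by auto
  have a: "r powr (- ((real N + \<alpha> - m) / (m - 1))) * psi r powr (m / (m - 1)) = r * \<bar>u' r\<bar> * psi r"
  proof -
    have "psi r powr (m / (m - 1)) = psi r powr (m / (m - 1) - 1) * psi r"
      using ps by (simp add: powr_diff)
    then show ?thesis using ident2[OF r] by (metis mult.assoc)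
  qed
  have b: "r powr (N + \<alpha> - 1) * \<bar>u' r\<bar> powr (m - 1) = psi r" using psi_eq r by auto
  have c: "u' r = - \<bar>u' r\<bar>" using u'_neg[OF r] by simp
  have "Ff r = - (m - 1) / m * psi r * (r * u' r + ((real N + \<alpha> - m) / (m - 1)) * u r)
     + lam / (p + 1) * (r powr (N + \<beta>) * u r powr (p + 1))"
    unfolding Ff_def b[symmetric] by (simp add: mult.assoc)
  also have "\<dots> = - (m - 1) / m * ((real N + \<alpha> - m) / (m - 1) * (psi r * u r)
            - r powr (- ((real N + \<alpha> - m) / (m - 1))) * psi r powr (m / (m - 1)))
          + lam / (p + 1) * (r powr (real N + \<beta>) * u r powr (p + 1))"
    unfolding a by (subst c) (simp only: ring1)
  finally show ?thesis .
qed

lemma F_cont: "continuous_on {s0..} Ff"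
proof -
  define f1 where "f1 x = x powr (N + \<alpha> - 1)" for x :: real
  define f2 where "f2 x = \<bar>u' x\<bar> powr (m - 1)" for x
  define f3 where "f3 x = x powr (N + \<beta>)" for x :: real
  define f4 where "f4 x = u x powr (p + 1)" for x
  have c1: "continuous_on {s0..} f1" unfolding f1_def
    by (rule continuous_on_powr'[OF continuous_on_id continuous_on_const]) (use s0 apos m1 in auto)
  have c2: "continuous_on {s0..} f2" unfolding f2_def
    by (rule continuous_on_powr'[OF continuous_on_rabs[OF u'c] continuous_on_const]) (use m1 in auto)
  have c3: "continuous_on {s0..} f3" unfolding f3_def
    by (rule continuous_on_powr'[OF continuous_on_id continuous_on_const]) (use s0 apos ba m1 in auto)
  have c4: "continuous_on {s0..} f4" unfolding f4_def
    by (rule continuous_on_powr'[OF u_cont continuous_on_const]) (use upos pm m1 in \<open>auto intro: less_imp_le\<close>)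
  have eq: "Ff = (\<lambda>x. - (m - 1) / m * f1 x * f2 x * (x * u' x + ((real N + \<alpha> - m) / (m - 1)) * u x)
     + lam / (p + 1) * (f3 x * f4 x))"
    unfolding Ff_def f1_def f2_def f3_def f4_def by (rule ext) simp
  have cont: "continuous_on {s0..} (\<lambda>x. - (m - 1) / m * f1 x * f2 x * (x * u' x + ((real N + \<alpha> - m) / (m - 1)) * u x)
     + lam / (p + 1) * (f3 x * f4 x))"
    by (rule continuous_on_add[OF continuous_on_mult[OF continuous_on_mult[OF continuous_on_mult[OF continuous_on_const c1] c2]
          continuous_on_add[OF continuous_on_mult[OF continuous_on_id u'c] continuous_on_mult[OF continuous_on_const u_cont]]]
          continuous_on_mult[OF continuous_on_const continuous_on_mult[OF c3 c4]]])
  show ?thesis unfolding eq by (rule cont)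
qed

lemma pohozaev:
  assumes r: "r > s0"
  shows "lam * ((N + \<beta>) / (p + 1) - (N + \<alpha> - m) / m) * integral {s0..r} (\<lambda>s. s powr (N + \<beta> - 1) * u s powr (p + 1))
     = Ff r - Ff s0"
proof -
  have "((\<lambda>s. lam * ((N + \<beta>) / (p + 1) - (N + \<alpha> - m) / m) * (s powr (N + \<beta> - 1) * u s powr (p + 1)))
      has_integral Ff r - Ff s0) {s0..r}"
  proof (rule fundamental_theorem_of_calculus_interior)
    show "s0 \<le> r" using r by simp
    show "continuous_on {s0..r} Ff" by (rule continuous_on_subset[OF F_cont]) auto
  next
    fix x assume x: "x \<in> {s0<..<r}"
    then have xs: "x > s0" by auto
    have "(Ff has_real_derivative lam * ((N + \<beta>) / (p + 1) - (N + \<alpha> - m) / m) * (x powr (N + \<beta> - 1) * u x powr (p + 1))) (at x)"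
      by (rule has_field_derivative_transform_within_open[OF G_der[OF xs], of "{s0<..}"])
         (use xs F_eq_G in auto)
    then show "(Ff has_vector_derivative lam * ((N + \<beta>) / (p + 1) - (N + \<alpha> - m) / m) * (x powr (N + \<beta> - 1) * u x powr (p + 1))) (at x)"
      by (simp add: has_real_derivative_iff_has_vector_derivative)
  qed
  then have "integral {s0..r} (\<lambda>s. lam * ((N + \<beta>) / (p + 1) - (N + \<alpha> - m) / m) * (s powr (N + \<beta> - 1) * u s powr (p + 1)))
     = Ff r - Ff s0" by (rule integral_unique)
  then show ?thesis by (simp only: integral_mult_right)
qed

end

lemma c0f_pos: "lam > 0 \<Longrightarrow> c0f N m \<alpha> \<beta> lam > 0"
proof -
  assume lam: "lam > 0"
  have h: "min 1 (2 powr (real N + \<beta> - 1)) > 0" by simp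
  have "lam * min 1 (2 powr (real N + \<beta> - 1)) / (2 * 2 powr (real N + \<alpha> - 1)) > 0"
    using lam h by (intro divide_pos_pos mult_pos_pos) auto
  then have "... \<noteq> 0" by linarith
  then show ?thesis unfolding c0f_def by (intro divide_pos_pos) (simp_all only: powr_gt_zero, simp)
qed

lemma Kf_pos: "lam > 0 \<Longrightarrow> Kf N m \<alpha> \<beta> lam p > 0"
proof -
  assume lam: "lam > 0"
  have "1 / c0f N m \<alpha> \<beta> lam \<noteq> 0" using c0f_pos[OF lam, of N m \<alpha> \<beta>] by simp
  then have "(1 / c0f N m \<alpha> \<beta> lam) powr (1 / (p / (m - 1) - 1)) * 2 powr ((\<beta> - \<alpha> + m) / (p - m + 1)) > 0"
    by simp
  then show ?thesis unfolding Kf_def by (rule less_le_trans) simp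
qed

lemma ring2: "((- x / y * a * b * c + l * (d * e)) - (- x / y * a' * b' * c' + l * (d' * 1)) :: real)
   = - x / y * a * b * c + x / y * a' * b' * c' + l * (d * e - d')"
  by (simp add: minus_divide_left[symmetric] algebra_simps)

lemma decay_ext:
  assumes "m > 1" "real N + \<alpha> - m > 0" "\<beta> - \<alpha> + 1 > 0" "lam > 0" "p > m - 1" "s0 \<ge> 0"
    "positive_solution N m \<alpha> \<beta> lam p s0 u u'" "r > s0"
  shows "u r \<le> Kf N m \<alpha> \<beta> lam p * r powr (- ((\<beta> - \<alpha> + m) / (p - m + 1)))"
proof -
  from assms(7) obtain \<phi>' where
    "\<forall>r>s0. ((\<lambda>t. flux N \<alpha> m t (u' t)) has_real_derivative \<phi>' r) (at r)"
    "\<forall>r>s0. - \<phi>' r = lam * r powr (N + \<beta> - 1) * u r powr p"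
    unfolding positive_solution_def by blast
  then interpret psol N m \<alpha> \<beta> lam p s0 u u' \<phi>'
    by unfold_locales (use assms in \<open>auto simp: positive_solution_def\<close>)
  show ?thesis by (rule decay) (rule assms(8))
qed

lemma poho_ext:
  assumes "m > 1" "real N + \<alpha> - m > 0" "\<beta> - \<alpha> + 1 > 0" "lam > 0" "p > m - 1" "s0 \<ge> 0"
    "positive_solution N m \<alpha> \<beta> lam p s0 u u'" "r > s0"
  shows "lam * ((N + \<beta>) / (p + 1) - (N + \<alpha> - m) / m) *
                integral {s0..r} (\<lambda>s. s powr (N + \<beta> - 1) * u s powr (p + 1))
              = - (m - 1) / m * r powr (N + \<alpha> - 1) * \<bar>u' r\<bar> powr (m - 1) * (r * u' r + ((real N + \<alpha> - m) / (m - 1)) * u r)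
                + (m - 1) / m * s0 powr (N + \<alpha> - 1) * \<bar>u' s0\<bar> powr (m - 1) * (s0 * u' s0 + ((real N + \<alpha> - m) / (m - 1)) * u s0)
                + lam / (p + 1) * (r powr (N + \<beta>) * u r powr (p + 1) - s0 powr (N + \<beta>))"
proof -
  from assms(7) obtain \<phi>' where
    "\<forall>r>s0. ((\<lambda>t. flux N \<alpha> m t (u' t)) has_real_derivative \<phi>' r) (at r)"
    "\<forall>r>s0. - \<phi>' r = lam * r powr (N + \<beta> - 1) * u r powr p"
    unfolding positive_solution_def by blast
  then interpret psol N m \<alpha> \<beta> lam p s0 u u' \<phi>'
    by unfold_locales (use assms in \<open>auto simp: positive_solution_def\<close>)
  show ?thesis unfolding pohozaev[OF assms(8)] Ff_def u0 powr_one_eq_one by (rule ring2)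
qed

theorem lemma3p2:
  fixes N :: nat and m \<alpha> \<beta> lam p :: real
  assumes "N \<ge> 1" and "m > 1"
    and "real N + \<alpha> - m > 0" and "\<beta> - \<alpha> + 1 > 0"
    and "lam > 0" and "p > m - 1"
  defines "\<rho> \<equiv> (real N + \<alpha> - m) / (m - 1)"
  shows "(\<exists>C1>0. \<exists>C2>0. \<forall>s0 u u'. s0 \<ge> 0 \<and> positive_solution N m \<alpha> \<beta> lam p s0 u u' \<longrightarrow>
            (\<forall>r>s0. r powr (N + \<beta>) * u r powr (p + 1) \<le>
               (if N + \<beta> \<noteq> \<rho> * p
                then C1 * r powr (- (m * (N + \<beta>) - (N + \<alpha> - m) * (p + 1)) / (p - m + 1))
                else C2 * r powr (- ((N + \<alpha> - m) * (p + 1) - (m - 1) * (N + \<beta>)) / (m - 1)))))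
       \<and> (\<forall>s0 u u'. s0 \<ge> 0 \<and> positive_solution N m \<alpha> \<beta> lam p s0 u u' \<longrightarrow>
            (\<forall>r>s0.
              lam * ((N + \<beta>) / (p + 1) - (N + \<alpha> - m) / m) *
                integral {s0..r} (\<lambda>s. s powr (N + \<beta> - 1) * u s powr (p + 1))
              = - (m - 1) / m * r powr (N + \<alpha> - 1) * \<bar>u' r\<bar> powr (m - 1) * (r * u' r + \<rho> * u r)
                + (m - 1) / m * s0 powr (N + \<alpha> - 1) * \<bar>u' s0\<bar> powr (m - 1) * (s0 * u' s0 + \<rho> * u s0)
                + lam / (p + 1) * (r powr (N + \<beta>) * u r powr (p + 1) - s0 powr (N + \<beta>))))"
proof
  define \<theta> where "\<theta> = (\<beta> - \<alpha> + m) / (p - m + 1)"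
  define K where "K = Kf N m \<alpha> \<beta> lam p"
  have K: "K > 0" unfolding K_def by (rule Kf_pos) (use assms in auto)
  have pm1: "p - m + 1 > 0" using assms by auto
  have E1: "- (m * (N + \<beta>) - (N + \<alpha> - m) * (p + 1)) / (p - m + 1) = N + \<beta> - \<theta> * (p + 1)"
    unfolding \<theta>_def using pm1 by (simp add: field_simps)
  have E2: "- ((N + \<alpha> - m) * (p + 1) - (m - 1) * (N + \<beta>)) / (m - 1) = N + \<beta> - \<theta> * (p + 1)"
    if h: "N + \<beta> = \<rho> * p"
  proof -
    have m0: "m - 1 \<noteq> 0" using assms by auto
    have r1: "\<rho> * (m - 1) = N + \<alpha> - m" unfolding \<rho>_def using m0 by simp
    have "\<beta> - \<alpha> + m = \<rho> * (p - m + 1)" using h r1 by (simp add: algebra_simps)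
    then have th: "\<theta> = \<rho>" unfolding \<theta>_def using pm1 by simp
    have "- ((N + \<alpha> - m) * (p + 1) - (m - 1) * (N + \<beta>)) / (m - 1) = (N + \<beta>) - \<rho> * (p + 1)"
      unfolding r1[symmetric] using m0 by (simp add: field_simps)
    then show ?thesis unfolding th .
  qed
  have bound: "r powr (N + \<beta>) * u r powr (p + 1) \<le> K powr (p + 1) * r powr (N + \<beta> - \<theta> * (p + 1))"
    if s: "s0 \<ge> 0" "positive_solution N m \<alpha> \<beta> lam p s0 u u'" and r: "r > s0" for s0 u u' r
  proof -
    have d: "u r \<le> K * r powr (- \<theta>)" unfolding K_def \<theta>_def
      by (rule decay_ext) (use assms s r in auto)
    have rp: "r > 0" using s r by auto
    have up: "u r > 0" using s(2) r unfolding positive_solution_def by auto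
    have "u r powr (p + 1) \<le> (K * r powr (- \<theta>)) powr (p + 1)"
      by (rule powr_mono2) (use assms d up in auto)
    also have "\<dots> = K powr (p + 1) * r powr (- \<theta> * (p + 1))"
      using K rp by (simp add: powr_mult powr_powr)
    finally have "r powr (N + \<beta>) * u r powr (p + 1) \<le> r powr (N + \<beta>) * (K powr (p + 1) * r powr (- \<theta> * (p + 1)))"
      by (intro mult_left_mono) auto
    also have "\<dots> = K powr (p + 1) * r powr (N + \<beta> - \<theta> * (p + 1))"
      by (simp add: powr_add[symmetric] algebra_simps)
    finally show ?thesis .
  qed
  have Kp: "K powr (p + 1) > 0" using K by simp
  show "\<exists>C1>0. \<exists>C2>0. \<forall>s0 u u'. s0 \<ge> 0 \<and> positive_solution N m \<alpha> \<beta> lam p s0 u u' \<longrightarrow>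
            (\<forall>r>s0. r powr (N + \<beta>) * u r powr (p + 1) \<le>
               (if N + \<beta> \<noteq> \<rho> * p
                then C1 * r powr (- (m * (N + \<beta>) - (N + \<alpha> - m) * (p + 1)) / (p - m + 1))
                else C2 * r powr (- ((N + \<alpha> - m) * (p + 1) - (m - 1) * (N + \<beta>)) / (m - 1))))"
  proof (intro exI[of _ "K powr (p + 1)"] conjI allI impI Kp)
    fix s0 u u' r
    assume s: "s0 \<ge> 0 \<and> positive_solution N m \<alpha> \<beta> lam p s0 u u'" and r: "r > s0"
    show "r powr (N + \<beta>) * u r powr (p + 1) \<le>
               (if N + \<beta> \<noteq> \<rho> * p
                then K powr (p + 1) * r powr (- (m * (N + \<beta>) - (N + \<alpha> - m) * (p + 1)) / (p - m + 1))
                else K powr (p + 1) * r powr (- ((N + \<alpha> - m) * (p + 1) - (m - 1) * (N + \<beta>)) / (m - 1)))"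
      using bound[of s0 u u' r] s r E1 E2 by auto
  qed
  show "\<forall>s0 u u'. s0 \<ge> 0 \<and> positive_solution N m \<alpha> \<beta> lam p s0 u u' \<longrightarrow>
            (\<forall>r>s0.
              lam * ((N + \<beta>) / (p + 1) - (N + \<alpha> - m) / m) *
                integral {s0..r} (\<lambda>s. s powr (N + \<beta> - 1) * u s powr (p + 1))
              = - (m - 1) / m * r powr (N + \<alpha> - 1) * \<bar>u' r\<bar> powr (m - 1) * (r * u' r + \<rho> * u r)
                + (m - 1) / m * s0 powr (N + \<alpha> - 1) * \<bar>u' s0\<bar> powr (m - 1) * (s0 * u' s0 + \<rho> * u s0)
                + lam / (p + 1) * (r powr (N + \<beta>) * u r powr (p + 1) - s0 powr (N + \<beta>)))"
    unfolding \<rho>_def using poho_ext assms by blast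
qed

end
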